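(* Let $\mathfrak{C}$ be a chromosome-set. For every finite substring $s$ of $\mathfrak{C}$ there exists a unique MES for $\mathfrak{C}$, denoted $MES(s)$, such that $s$ occurs exactly once in $MES(s)$ and every occurrence of $s$ in an element of $\mathfrak{C}$ extends to an occurrence of $MES(s)$ (i.e. lies, at the position of this unique occurrence, inside an occurrence of $MES(s)$ in the same element).
   Context: All strings are over a fixed finite alphabet $\Sigma$. A cyclic string is a bi-infinite periodic word $\mathbb{Z}\to\Sigma$ up to shift, with least period $d$. A finite string is a substring of a cyclic string $c$ if it is a contiguous block of $c$; its occurrences in $c$ are counted by start positions modulo $d$; a cyclic string is a substring only of itself. A chromosome-set is a (possibly infinite) set of cyclic strings; a string is a substring of it if it is a substring of one of its elements. A (finite or cyclic) string $s$ is a multiplicity-extremal substring (MES) for $\mathfrak{C}$ if $s$ is a substring of $\mathfrak{C}$ and every proper superstring $t$ of $s$ (a string $t\neq s$ containing $s$ as a substring) has, in at least one element of $\mathfrak{C}$, strictly fewer occurrences than $s$. *)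

theory Defs
  imports Main
begin

text \<open>A cyclic string is represented canonically as the shift-orbit of a periodic
bi-infinite word \<open>int \<Rightarrow> 'a\<close>; thus two cyclic strings are equal iff they
are equal up to shift.\<close>

definition shift :: "(int \<Rightarrow> 'a) \<Rightarrow> int \<Rightarrow> (int \<Rightarrow> 'a)" where
  "shift f k = (\<lambda>i. f (i + k))"

definition is_cyclic :: "(int \<Rightarrow> 'a) set \<Rightarrow> bool" where
  "is_cyclic S \<longleftrightarrow> (\<exists>f p. p > (0::int) \<and> (\<forall>i. f (i + p) = f i) \<and> S = range (shift f))"

definition per :: "(int \<Rightarrow> 'a) \<Rightarrow> nat" where
  "per f = (LEAST p::nat. p > 0 \<and> (\<forall>i. f (i + int p) = f i))"

definition rep :: "(int \<Rightarrow> 'a) set \<Rightarrow> (int \<Rightarrow> 'a)" where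
  "rep S = (SOME f. f \<in> S)"

datatype 'a str = Fin "'a list" | Cyc "(int \<Rightarrow> 'a) set"

fun wf_str :: "'a str \<Rightarrow> bool" where
  "wf_str (Fin u) = True"
| "wf_str (Cyc S) = is_cyclic S"

definition occurs_at :: "'a list \<Rightarrow> (int \<Rightarrow> 'a) \<Rightarrow> int \<Rightarrow> bool" where
  "occurs_at s f i \<longleftrightarrow> (\<forall>j<length s. f (i + int j) = s ! j)"

definition occurs_at_list :: "'a list \<Rightarrow> 'a list \<Rightarrow> nat \<Rightarrow> bool" where
  "occurs_at_list s u k \<longleftrightarrow> k + length s \<le> length u \<and> (\<forall>j<length s. u ! (k + j) = s ! j)"

fun substr :: "'a str \<Rightarrow> 'a str \<Rightarrow> bool" where
  "substr (Fin s) (Fin u) = (\<exists>xs ys. u = xs @ s @ ys)"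
| "substr (Fin s) (Cyc S) = (\<exists>f\<in>S. \<exists>i. occurs_at s f i)"
| "substr (Cyc T) (Fin u) = False"
| "substr (Cyc T) (Cyc S) = (T = S)"

fun occ_fin :: "'a list \<Rightarrow> 'a str \<Rightarrow> nat" where
  "occ_fin s (Fin u) = card {k. occurs_at_list s u k}"
| "occ_fin s (Cyc S) =
     card {i::int. 0 \<le> i \<and> i < int (per (rep S)) \<and> occurs_at s (rep S) i}"

fun occ :: "'a str \<Rightarrow> (int \<Rightarrow> 'a) set \<Rightarrow> nat" where
  "occ (Fin s) S = occ_fin s (Cyc S)"
| "occ (Cyc T) S = (if T = S then 1 else 0)"

definition chromosome_set :: "(int \<Rightarrow> 'a) set set \<Rightarrow> bool" where
  "chromosome_set C \<longleftrightarrow> (\<forall>S\<in>C. is_cyclic S)"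

definition substr_of :: "'a str \<Rightarrow> (int \<Rightarrow> 'a) set set \<Rightarrow> bool" where
  "substr_of t C \<longleftrightarrow> (\<exists>S\<in>C. substr t (Cyc S))"

definition MES :: "(int \<Rightarrow> 'a) set set \<Rightarrow> 'a str \<Rightarrow> bool" where
  "MES C s \<longleftrightarrow> wf_str s \<and> substr_of s C \<and>
     (\<forall>t. wf_str t \<and> t \<noteq> s \<and> substr s t \<longrightarrow> (\<exists>S\<in>C. occ t S < occ s S))"

text \<open>For cyclic \<open>m\<close>, an occurrence of \<open>m\<close> in the cyclic string of \<open>f\<close> means that
  \<open>f\<close> represents \<open>m\<close>.\<close>
fun extends_to :: "'a list \<Rightarrow> (int \<Rightarrow> 'a) \<Rightarrow> int \<Rightarrow> 'a str \<Rightarrow> bool" where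
  "extends_to s f i (Fin u) =
     (\<exists>k. occurs_at_list s u k \<and> occurs_at u f (i - int k))"
| "extends_to s f i (Cyc T) = (f \<in> T)"

end

theory Submission
  imports Defs
begin


lemma shift_shift[simp]: "shift (shift f a) b = shift f (a + b)"
  unfolding shift_def by (simp add: ac_simps)
lemma shift_0[simp]: "shift f 0 = f"
  unfolding shift_def by simp
lemma shift_app: "shift f k i = f (i + k)" unfolding shift_def by simp
lemma occurs_at_shift: "occurs_at u (shift f k) i = occurs_at u f (i + k)"
  unfolding occurs_at_def shift_def by (simp add: ac_simps)
lemma shift_inj: "shift f k = shift g k \<Longrightarrow> f = g"
proof
  fix x assume "shift f k = shift g k"
  then have "shift f k (x - k) = shift g k (x - k)" by simp
  then show "f x = g x" by (simp add: shift_app)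
qed

lemma per_nat: fixes f :: "int \<Rightarrow> 'a" and p :: int assumes "\<forall>i. f (i + p) = f i" shows "f (i + int n * p) = f i"
proof (induction n arbitrary: i)
  case 0 then show ?case by simp
next
  case (Suc n)
  have "f (i + int (Suc n) * p) = f ((i + int n * p) + p)" by (simp add: algebra_simps)
  also have "\<dots> = f (i + int n * p)" using assms by blast
  finally show ?case using Suc by simp
qed

lemma per_int: fixes f :: "int \<Rightarrow> 'a" and n p :: int assumes "\<forall>i. f (i + p) = f i" shows "f (i + n * p) = f i"
proof (cases "n \<ge> 0")
  case True then show ?thesis using per_nat[OF assms, of i "nat n"] by simp
next
  case False
  have "f (i + n * p) = f ((i + n * p) + int (nat (-n)) * p)"
    using per_nat[OF assms, of "i + n * p" "nat (-n)"] by simp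
  also have "\<dots> = f i" using False by (simp add: algebra_simps)
  finally show ?thesis .
qed

lemma cyclic_props:
  assumes "is_cyclic S" "f \<in> S"
  shows "S = range (shift f)" "\<exists>p>0. \<forall>i. f (i + p) = f i"
proof -
  obtain g p where g: "p > (0::int)" "\<forall>i. g (i + p) = g i" "S = range (shift g)"
    using assms(1) unfolding is_cyclic_def by blast
  obtain j where j: "f = shift g j" using g(3) assms(2) by blast
  have "range (shift f) = range (\<lambda>k. shift g (j + k))" using j by simp
  also have "\<dots> = range (shift g)"
  proof
    show "range (\<lambda>k. shift g (j + k)) \<subseteq> range (shift g)" by blast
    show "range (shift g) \<subseteq> range (\<lambda>k. shift g (j + k))"
    proof
      fix x assume "x \<in> range (shift g)"
      then obtain k where "x = shift g k" by blast
      then have "x = (\<lambda>k. shift g (j + k)) (k - j)" by simp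
      then show "x \<in> range (\<lambda>k. shift g (j + k))" by blast
    qed
  qed
  finally show "S = range (shift f)" using g(3) by simp
  have "\<forall>i. f (i + p) = f i" using g(2) j unfolding shift_def by (metis add.commute add.left_commute)
  then show "\<exists>p>0. \<forall>i. f (i + p) = f i" using g(1) by blast
qed

lemma cyclic_shift_mem: "is_cyclic S \<Longrightarrow> f \<in> S \<Longrightarrow> shift f k \<in> S"
  using cyclic_props(1) by blast

lemma cyclic_same: "is_cyclic S \<Longrightarrow> is_cyclic T \<Longrightarrow> f \<in> S \<Longrightarrow> f \<in> T \<Longrightarrow> S = T"
  using cyclic_props(1) by metis

lemma shift_mod: fixes f :: "int \<Rightarrow> 'a" and p :: int assumes "\<forall>i. f (i + p) = f i" shows "shift f (j mod p) = shift f j"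
proof
  fix i
  have "f (i + j) = f ((i + j mod p) + (j div p) * p)" using per_int[OF assms, of "i + j mod p" "j div p"]
    by (metis add.assoc div_mult_mod_eq add.commute)
  then show "shift f (j mod p) i = shift f j i" using per_int[OF assms, of "i + j mod p" "j div p"]
    by (simp add: shift_app)
qed

lemma cyclic_finite: assumes "is_cyclic S" shows "finite S"
proof -
  obtain f where f: "f \<in> S" using assms unfolding is_cyclic_def by blast
  obtain p where p: "p > 0" "\<forall>i. f (i + p) = f i" using cyclic_props(2)[OF assms f] by blast
  have "S = shift f ` {0..<p}"
  proof
    show "S \<subseteq> shift f ` {0..<p}"
    proof
      fix x assume "x \<in> S"
      then obtain j where "x = shift f j" using cyclic_props(1)[OF assms f] by blast
      then have "x = shift f (j mod p)" using shift_mod[OF p(2)] by simp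
      moreover have "j mod p \<in> {0..<p}" using p(1) by simp
      ultimately show "x \<in> shift f ` {0..<p}" by blast
    qed
    show "shift f ` {0..<p} \<subseteq> S" using cyclic_shift_mem[OF assms f] by blast
  qed
  then show ?thesis by simp
qed

definition cnt :: "(int \<Rightarrow> 'a) set \<Rightarrow> 'a list \<Rightarrow> nat" where
  "cnt S u = card {w\<in>S. occurs_at u w 0}"

lemma occ_fin_cnt: assumes "is_cyclic S" shows "occ_fin u (Cyc S) = cnt S u"
proof -
  have ne: "S \<noteq> {}" using assms unfolding is_cyclic_def by blast
  define g where "g = rep S"
  have gS: "g \<in> S" unfolding g_def rep_def using ne by (simp add: some_in_eq)
  obtain p where p: "p > 0" "\<forall>i. g (i + p) = g i" using cyclic_props(2)[OF assms gS] by blast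
  define d where "d = per g"
  have ex: "\<exists>q::nat. q > 0 \<and> (\<forall>i. g (i + int q) = g i)"
    using p by (intro exI[of _ "nat p"]) simp
  have d: "d > 0" "\<forall>i. g (i + int d) = g i"
    using LeastI_ex[OF ex] unfolding d_def per_def by auto
  have dmin: "\<And>q::nat. q < d \<Longrightarrow> q > 0 \<Longrightarrow> \<not> (\<forall>i. g (i + int q) = g i)"
    unfolding d_def per_def using not_less_Least by blast
  have "occ_fin u (Cyc S) = card {i::int. 0 \<le> i \<and> i < int d \<and> occurs_at u g i}"
    by (simp add: g_def d_def)
  also have "\<dots> = card (shift g ` {i::int. 0 \<le> i \<and> i < int d \<and> occurs_at u g i})"
  proof (rule card_image[symmetric], rule inj_onI)
    fix i j assume i: "i \<in> {i::int. 0 \<le> i \<and> i < int d \<and> occurs_at u g i}"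
      and j: "j \<in> {i::int. 0 \<le> i \<and> i < int d \<and> occurs_at u g i}" and e: "shift g i = shift g j"
    show "i = j"
    proof (rule ccontr)
      assume "i \<noteq> j"
      have gen: "\<forall>x. g (x + (b - a)) = g x" if "shift g a = shift g b" for a b
      proof
        fix x have "shift g a (x - a) = shift g b (x - a)" using that by simp
        then show "g (x + (b - a)) = g x" by (simp add: shift_app algebra_simps)
      qed
      show False
      proof (cases "i < j")
        case True
        have "\<forall>x. g (x + int (nat (j - i))) = g x" using gen[OF e] True by simp
        moreover have "nat (j - i) < d" "nat (j - i) > 0" using i j True by auto
        ultimately show False using dmin by blast
      next
        case False
        then have "j < i" using \<open>i \<noteq> j\<close> by simp
        have "\<forall>x. g (x + int (nat (i - j))) = g x" using gen[OF e[symmetric]] \<open>j < i\<close> by simp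
        moreover have "nat (i - j) < d" "nat (i - j) > 0" using i j \<open>j < i\<close> by auto
        ultimately show False using dmin by blast
      qed
    qed
  qed
  also have "shift g ` {i::int. 0 \<le> i \<and> i < int d \<and> occurs_at u g i} = {w\<in>S. occurs_at u w 0}"
  proof
    show "shift g ` {i::int. 0 \<le> i \<and> i < int d \<and> occurs_at u g i} \<subseteq> {w\<in>S. occurs_at u w 0}"
      using cyclic_shift_mem[OF assms gS] by (auto simp: occurs_at_shift)
    show "{w\<in>S. occurs_at u w 0} \<subseteq> shift g ` {i::int. 0 \<le> i \<and> i < int d \<and> occurs_at u g i}"
    proof
      fix w assume w: "w \<in> {w\<in>S. occurs_at u w 0}"
      then obtain j where j: "w = shift g j" using cyclic_props(1)[OF assms gS] by blast
      have "w = shift g (j mod int d)" using shift_mod[OF d(2)] j by simp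
      moreover have "occurs_at u g (j mod int d)" using w \<open>w = shift g (j mod int d)\<close>
        by (simp add: occurs_at_shift)
      moreover have "0 \<le> j mod int d" "j mod int d < int d" using d(1) by auto
      ultimately show "w \<in> shift g ` {i::int. 0 \<le> i \<and> i < int d \<and> occurs_at u g i}" by blast
    qed
  qed
  finally show ?thesis unfolding cnt_def .
qed

lemma periodic_eq_pos:
  fixes f g :: "int \<Rightarrow> 'a" and p q :: int
  assumes "\<forall>i. f (i + p) = f i" "p > 0" "\<forall>i. g (i + q) = g i" "q > 0"
    and "\<forall>a\<ge>0. f a = g a"
  shows "f = g"
proof
  fix a
  have pq: "p * q \<ge> 1" using mult_pos_pos[OF assms(2,4)] by linarith  
  have "f a = f (a + (\<bar>a\<bar> * q) * p)" using per_int[OF assms(1)] by simp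
  also have "\<dots> = g (a + (\<bar>a\<bar> * q) * p)"
  proof -
    have "\<bar>a\<bar> * q * p \<ge> \<bar>a\<bar>" using pq by (metis abs_ge_zero mult.assoc mult.commute mult_le_cancel_left1 mult_right_mono not_le mult_1)
    then show ?thesis using assms(5) by simp
  qed
  also have "\<dots> = g (a + (\<bar>a\<bar> * p) * q)" by (simp add: ac_simps)
  also have "\<dots> = g a" using per_int[OF assms(3)] by simp
  finally show "f a = g a" .
qed

lemma periodic_eq_neg:
  fixes f g :: "int \<Rightarrow> 'a" and p q :: int
  assumes "\<forall>i. f (i + p) = f i" "p > 0" "\<forall>i. g (i + q) = g i" "q > 0"
    and "\<forall>a<0. f a = g a"
  shows "f = g"
proof
  fix a
  have pq: "p * q \<ge> 1" using mult_pos_pos[OF assms(2,4)] by linarith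
  have "f a = f (a + (- (\<bar>a\<bar> + 1) * q) * p)" using per_int[OF assms(1)] by simp
  also have "\<dots> = g (a + (- (\<bar>a\<bar> + 1) * q) * p)"
  proof -
    have "(\<bar>a\<bar> + 1) * q * p \<ge> \<bar>a\<bar> + 1" using pq
      by (metis abs_ge_zero add_increasing2 mult.assoc mult.commute mult_le_cancel_left1 not_le zero_le_one)
    then have "a + (- (\<bar>a\<bar> + 1) * q) * p < 0" by (simp add: algebra_simps)
    then show ?thesis using assms(5) by blast
  qed
  also have "\<dots> = g (a + (- (\<bar>a\<bar> + 1) * p) * q)" by (simp add: ac_simps)
  also have "\<dots> = g a" using per_int[OF assms(3)] by simp
  finally show "f a = g a" .
qed



definition occW :: "(int \<Rightarrow> 'a) set set \<Rightarrow> 'a list \<Rightarrow> (int \<Rightarrow> 'a) set" where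
  "occW C s = {w. (\<exists>S\<in>C. w \<in> S) \<and> occurs_at s w 0}"

lemma occW_intro: "chromosome_set C \<Longrightarrow> S \<in> C \<Longrightarrow> f \<in> S \<Longrightarrow> occurs_at s f i \<Longrightarrow> shift f i \<in> occW C s"
  unfolding occW_def chromosome_set_def using cyclic_shift_mem by (fastforce simp: occurs_at_shift)

lemma occ_Fin_cnt: "chromosome_set C \<Longrightarrow> S \<in> C \<Longrightarrow> occ (Fin u) S = cnt S u"
  unfolding chromosome_set_def using occ_fin_cnt[of S u] by simp

lemma cnt_strict:
  assumes "finite S" "\<forall>w\<in>S. \<forall>k. shift w k \<in> S" "x \<in> S" "occurs_at u x 0"
    "v = xs @ u @ ys" "p < length v" "x (int p - int (length xs)) \<noteq> v ! p"
  shows "cnt S v < cnt S u"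
proof -
  let ?A = "{w\<in>S. occurs_at v w 0}" and ?B = "{w\<in>S. occurs_at u w 0}"
  let ?g = "\<lambda>w. shift w (int (length xs))"
  have inj: "inj_on ?g ?A" by (rule inj_onI) (auto dest: shift_inj)
  have sub: "?g ` ?A \<subseteq> ?B"
  proof
    fix y assume "y \<in> ?g ` ?A"
    then obtain w where w: "w \<in> S" "occurs_at v w 0" "y = ?g w" by blast
    have "occurs_at u w (int (length xs))"
      unfolding occurs_at_def
    proof (intro allI impI)
      fix j assume j: "j < length u"
      have a: "\<forall>j<length v. w (0 + int j) = v ! j" using w(2) unfolding occurs_at_def by simp
      have "length xs + j < length v" using j assms(5) by simp
      then have "w (0 + int (length xs + j)) = v ! (length xs + j)" using a by blast
      then show "w (int (length xs) + int j) = u ! j" using j assms(5) by (simp add: nth_append)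
    qed
    then show "y \<in> ?B" using w assms(2) by (simp add: occurs_at_shift)
  qed
  have notin: "x \<notin> ?g ` ?A"
  proof
    assume "x \<in> ?g ` ?A"
    then obtain w where w: "w \<in> S" "occurs_at v w 0" "x = ?g w" by blast
    have "x (int p - int (length xs)) = w (int p)" using w(3) by (simp add: shift_app)
    also have "\<dots> = v ! p" using w(2) assms(6) unfolding occurs_at_def by simp
    finally show False using assms(7) by simp
  qed
  have "?g ` ?A \<subset> ?B" using sub notin assms(3,4) by blast
  then have "card (?g ` ?A) < card ?B" using assms(1) by (intro psubset_card_mono) auto
  then show ?thesis unfolding cnt_def using card_image[OF inj] by simp
qed

lemma cnt_le:
  assumes "finite S" "\<forall>w\<in>S. \<forall>k. shift w k \<in> S"
    "\<forall>w\<in>S. occurs_at u' w 0 \<longrightarrow> occurs_at u (shift w c) 0"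
  shows "cnt S u' \<le> cnt S u"
proof -
  let ?A = "{w\<in>S. occurs_at u' w 0}" and ?B = "{w\<in>S. occurs_at u w 0}"
  have inj: "inj_on (\<lambda>w. shift w c) ?A" by (rule inj_onI) (auto dest: shift_inj)
  have "(\<lambda>w. shift w c) ` ?A \<subseteq> ?B" using assms(2,3) by auto
  then show ?thesis unfolding cnt_def using card_inj_on_le[OF inj] assms(1) by auto
qed

lemma cyc_closed: "is_cyclic S \<Longrightarrow> \<forall>w\<in>S. \<forall>k. shift w k \<in> S"
  using cyclic_shift_mem by blast



lemma occ_list_trans: "occurs_at_list s u k \<Longrightarrow> occurs_at u f i \<Longrightarrow> occurs_at s f (i + int k)"
  unfolding occurs_at_list_def occurs_at_def
proof (intro allI impI)
  fix j assume a: "k + length s \<le> length u \<and> (\<forall>j<length s. u ! (k + j) = s ! j)"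
    "\<forall>j<length u. f (i + int j) = u ! j" and j: "j < length s"
  have "k + j < length u" using a j by simp
  then have "f (i + int (k + j)) = u ! (k + j)" using a by blast
  also have "\<dots> = s ! j" using a j by blast
  finally show "f (i + int k + int j) = s ! j" by (simp add: algebra_simps)
qed

lemma shift_back: "shift (shift f i) (- i) = f" by simp

definition Pm :: "(int \<Rightarrow> 'a) set set \<Rightarrow> 'a list \<Rightarrow> 'a str \<Rightarrow> bool" where
  "Pm C s m \<longleftrightarrow> MES C m \<and> occ_fin s m = 1 \<and>
           (\<forall>S\<in>C. \<forall>f\<in>S. \<forall>i. occurs_at s f i \<longrightarrow> extends_to s f i m)"

lemma caseA:
  assumes C: "chromosome_set C" and W: "occW C s = {w0}"
  shows "\<exists>!m. Pm C s m"
proof -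
  have "w0 \<in> occW C s" using W by simp
  then obtain S0 where S0: "S0 \<in> C" "w0 \<in> S0" and sw0: "occurs_at s w0 0" unfolding occW_def by blast
  have cyc: "is_cyclic S0" using C S0 unfolding chromosome_set_def by blast
  have setS0: "{w\<in>S0. occurs_at s w 0} = {w0}"
    using W S0 sw0 unfolding occW_def by blast
  have cntS0: "occ_fin s (Cyc S0) = 1" using occ_fin_cnt[OF cyc] setS0 unfolding cnt_def by simp
  have ext: "f \<in> S0" if "S \<in> C" "f \<in> S" "occurs_at s f i" for S f i
  proof -
    have "shift f i = w0" using occW_intro[OF C that] W by simp
    then have "f = shift w0 (- i)" using shift_back[of f i] by simp
    then show ?thesis using cyclic_shift_mem[OF cyc S0(2)] by simp
  qed
  have P: "Pm C s (Cyc S0)"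
    unfolding Pm_def MES_def substr_of_def
  proof (intro conjI ballI allI impI)
    show "wf_str (Cyc S0)" using cyc by simp
    show "\<exists>S\<in>C. substr (Cyc S0) (Cyc S)" using S0 by auto
    show "occ_fin s (Cyc S0) = 1" by (rule cntS0)
    fix t assume "wf_str t \<and> t \<noteq> Cyc S0 \<and> substr (Cyc S0) t"
    then show "\<exists>S\<in>C. occ t S < occ (Cyc S0) S" by (cases t) auto
  next
    fix S f i assume "S \<in> C" "f \<in> S" "occurs_at s f i"
    then show "extends_to s f i (Cyc S0)" using ext by simp
  qed
  show ?thesis
  proof (rule ex1I[of _ "Cyc S0"], rule P)
    fix m assume Pm: "Pm C s m"
    show "m = Cyc S0"
    proof (cases m)
      case (Cyc T)
      have "is_cyclic T" using Pm Cyc unfolding Pm_def MES_def by simp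
      moreover have "extends_to s w0 0 m" using Pm S0 sw0 unfolding Pm_def by blast
      then have "w0 \<in> T" using Cyc by simp
      ultimately show ?thesis using cyclic_same[OF cyc _ S0(2)] Cyc by blast
    next
      case (Fin u')
      have "extends_to s w0 0 m" using Pm S0 sw0 unfolding Pm_def by blast
      then obtain k where k: "occurs_at_list s u' k" "occurs_at u' w0 (- int k)"
        using Fin by auto
      have "substr (Fin u') (Cyc S0)" using k S0 by auto
      moreover have "\<forall>t. wf_str t \<and> t \<noteq> Fin u' \<and> substr (Fin u') t \<longrightarrow> (\<exists>S\<in>C. occ t S < occ (Fin u') S)"
        using Pm Fin unfolding Pm_def MES_def by blast
      ultimately obtain S where S: "S \<in> C" "occ (Cyc S0) S < occ (Fin u') S"
        using cyc by (metis str.distinct(2) wf_str.simps(2))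
      have sub: "{w\<in>S. occurs_at u' w 0} \<subseteq> {shift w0 (- int k)}"
        and sub2: "{w\<in>S. occurs_at u' w 0} \<noteq> {} \<Longrightarrow> S = S0"
      proof -
        have *: "w = shift w0 (- int k) \<and> S = S0" if "w \<in> S" "occurs_at u' w 0" for w
        proof -
          have "occurs_at s w (int k)" using occ_list_trans[OF k(1) that(2)] by simp
          then have "shift w (int k) \<in> occW C s" using occW_intro[OF C S(1) that(1)] by blast
          then have "shift w (int k) = w0" using W by simp
          then have ww: "w = shift w0 (- int k)" using shift_back[of w "int k"] by simp
          then have "w \<in> S0" using cyclic_shift_mem[OF cyc S0(2)] by simp
          then have "S = S0" using cyclic_same[OF _ cyc that(1)] C S(1) unfolding chromosome_set_def by blast
          then show ?thesis using ww by simp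
        qed
        show "{w\<in>S. occurs_at u' w 0} \<subseteq> {shift w0 (- int k)}" using * by blast
        show "{w\<in>S. occurs_at u' w 0} \<noteq> {} \<Longrightarrow> S = S0" using * by blast
      qed
      have "occ (Fin u') S = card {w\<in>S. occurs_at u' w 0}"
        using occ_Fin_cnt[OF C S(1)] unfolding cnt_def by simp
      also have "\<dots> \<le> occ (Cyc S0) S"
      proof (cases "{w\<in>S. occurs_at u' w 0} = {}")
        case True then have "card {w\<in>S. occurs_at u' w 0} = 0" by (simp only: card.empty)
        then show ?thesis by simp
      next
        case False
        then have "S = S0" using sub2 by blast
        then show ?thesis using card_mono[OF _ sub] by simp
      qed
      finally show ?thesis using S(2) by simp
    qed
  qed
qed



lemma caseB:
  assumes C: "chromosome_set C" and s: "s \<noteq> []"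
    and w1: "w1 \<in> occW C s" and w2: "w2 \<in> occW C s" and ne: "w1 \<noteq> w2"
  shows "\<exists>!m. Pm C s m"
proof -
  let ?W = "occW C s"
  define ag where "ag a \<longleftrightarrow> (\<forall>w\<in>?W. \<forall>w'\<in>?W. w a = w' a)" for a
  have Wmem: "\<exists>S\<in>C. w \<in> S \<and> is_cyclic S" if "w \<in> ?W" for w
    using that C unfolding occW_def chromosome_set_def by blast
  have Wocc: "occurs_at s w 0" if "w \<in> ?W" for w using that unfolding occW_def by blast
  have per: "\<exists>p>0. \<forall>i. w (i + p) = w i" if "w \<in> ?W" for w
    using Wmem[OF that] cyclic_props(2) by blast
  obtain p1 where p1: "p1 > 0" "\<forall>i. w1 (i + p1) = w1 i" using per[OF w1] by blast
  obtain p2 where p2: "p2 > 0" "\<forall>i. w2 (i + p2) = w2 i" using per[OF w2] by blast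
  have exr: "\<exists>n::nat. \<not> ag (int n)"
  proof (rule ccontr)
    assume "\<not> (\<exists>n::nat. \<not> ag (int n))"
    then have "\<forall>a\<ge>0. w1 a = w2 a" using w1 w2 unfolding ag_def
      by (metis nat_0_le)
    then show False using periodic_eq_pos[OF p1(2,1) p2(2,1)] ne by blast
  qed
  have exl: "\<exists>n::nat. \<not> ag (- int n - 1)"
  proof (rule ccontr)
    assume a: "\<not> (\<exists>n::nat. \<not> ag (- int n - 1))"
    have "\<forall>a<0. w1 a = w2 a"
    proof (intro allI impI)
      fix a :: int assume "a < 0"
      then have "a = - int (nat (- a - 1)) - 1" by simp
      then show "w1 a = w2 a" using a w1 w2 unfolding ag_def by metis
    qed
    then show False using periodic_eq_neg[OF p1(2,1) p2(2,1)] ne by blast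
  qed
  define r where "r = (LEAST n::nat. \<not> ag (int n))"
  define l where "l = (LEAST n::nat. \<not> ag (- int n - 1))"
  have nr: "\<not> ag (int r)" unfolding r_def using LeastI_ex[OF exr] .
  have nl: "\<not> ag (- int l - 1)" unfolding l_def using LeastI_ex[OF exl] .
  have agI: "ag a" if "- int l \<le> a" "a < int r" for a
  proof (cases "a \<ge> 0")
    case True
    then have "nat a < r" "a = int (nat a)" using that by auto
    then show ?thesis using not_less_Least[of "nat a" "\<lambda>n. \<not> ag (int n)"] unfolding r_def by metis
  next
    case False
    then have "nat (- a - 1) < l" "a = - int (nat (- a - 1)) - 1" using that by auto
    then show ?thesis using not_less_Least[of "nat (- a - 1)" "\<lambda>n. \<not> ag (- int n - 1)"] unfolding l_def by metis
  qed
  have sr: "length s \<le> r"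
  proof (rule ccontr)
    assume "\<not> length s \<le> r"
    then have "r < length s" by simp
    then have "ag (int r)" unfolding ag_def using Wocc unfolding occurs_at_def by (metis add_0)
    then show False using nr by simp
  qed
  have rpos: "r > 0" using sr s by (cases s) auto
  define u where "u = map (\<lambda>j. w1 (int j - int l)) [0..<l+r]"
  have lu: "length u = l + r" unfolding u_def by simp
  have unth: "u ! j = w1 (int j - int l)" if "j < l + r" for j unfolding u_def using that by simp
  have U1: "occurs_at u w (- int l)" if w: "w \<in> ?W" for w
    unfolding occurs_at_def
  proof (intro allI impI)
    fix j assume j: "j < length u"
    have "ag (int j - int l)" using j lu by (intro agI) auto
    then have "w (int j - int l) = w1 (int j - int l)" using w w1 unfolding ag_def by blast
    then show "w (- int l + int j) = u ! j" using unth j lu by simp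
  qed
  have U2: "occurs_at_list s u l"
    unfolding occurs_at_list_def
  proof (intro conjI allI impI)
    show "l + length s \<le> length u" using lu sr by simp
    fix j assume j: "j < length s"
    have "u ! (l + j) = w1 (int j)" using unth[of "l + j"] j sr by simp
    also have "\<dots> = s ! j" using Wocc[OF w1] j unfolding occurs_at_def by simp
    finally show "u ! (l + j) = s ! j" .
  qed
  have U3: "k = l" if k: "occurs_at_list s u k" for k
  proof (rule ccontr)
    assume kl: "k \<noteq> l"
    have sh: "shift w (int k - int l) \<in> ?W" if w: "w \<in> ?W" for w
    proof -
      have "occurs_at s w (- int l + int k)" using occ_list_trans[OF k U1[OF w]] .
      moreover obtain S where "S \<in> C" "w \<in> S" using Wmem[OF w] by blast
      ultimately show ?thesis using occW_intro[OF C] by (simp add: algebra_simps)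
    qed
    have kb: "k + length s \<le> l + r" using k lu unfolding occurs_at_list_def by simp
    show False
    proof (cases "k > l")
      case True
      have "ag (int r)" unfolding ag_def
      proof (intro ballI)
        fix w w' assume w: "w \<in> ?W" and w': "w' \<in> ?W"
        have "ag (int r - (int k - int l))" using True kb by (intro agI) auto
        then have "shift w (int k - int l) (int r - (int k - int l)) = shift w' (int k - int l) (int r - (int k - int l))"
          using sh[OF w] sh[OF w'] unfolding ag_def by blast
        then show "w (int r) = w' (int r)" by (simp add: shift_app)
      qed
      then show False using nr by simp
    next
      case False
      then have kl2: "k < l" using kl by simp
      have "ag (- int l - 1)" unfolding ag_def
      proof (intro ballI)
        fix w w' assume w: "w \<in> ?W" and w': "w' \<in> ?W"
        have "ag (- int k - 1)" using kl2 rpos by (intro agI) auto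
        then have "shift w (int k - int l) (- int k - 1) = shift w' (int k - int l) (- int k - 1)"
          using sh[OF w] sh[OF w'] unfolding ag_def by blast
        then have "w (- 1 - int l) = w' (- 1 - int l)" by (simp add: shift_app)
        moreover have "- int l - 1 = - 1 - int l" by simp
        ultimately show "w (- int l - 1) = w' (- int l - 1)" by metis
      qed
      then show False using nl by simp
    qed
  qed
  have occ1: "occ_fin s (Fin u) = 1"
  proof -
    have "{k. occurs_at_list s u k} = {l}" using U2 U3 by blast
    then show ?thesis by simp
  qed
  have ext: "extends_to s f i (Fin u)" if "S \<in> C" "f \<in> S" "occurs_at s f i" for S f i
  proof -
    have "occurs_at u (shift f i) (- int l)" using U1 occW_intro[OF C that] by blast
    then have "occurs_at u f (i - int l)" by (simp add: occurs_at_shift algebra_simps)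
    then show ?thesis using U2 by auto
  qed
  obtain S1 where S1: "S1 \<in> C" "w1 \<in> S1" "is_cyclic S1" using Wmem[OF w1] by blast
  obtain S2 where S2: "S2 \<in> C" "w2 \<in> S2" "is_cyclic S2" using Wmem[OF w2] by blast
  have xmem: "shift w (- int l) \<in> {x\<in>S. occurs_at u x 0}" if "w \<in> ?W" "w \<in> S" "is_cyclic S" for w S
    using U1[OF that(1)] cyclic_shift_mem[OF that(3,2)] by (simp add: occurs_at_shift)
  have two: "\<exists>S\<in>C. occ (Cyc T) S < occ (Fin u) S" for T
  proof (cases "S1 = S2")
    case True
    have sub: "{shift w1 (- int l), shift w2 (- int l)} \<subseteq> {x\<in>S1. occurs_at u x 0}"
      using xmem[OF w1 S1(2,3)] xmem[OF w2 S2(2,3)] True by blast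
    have "shift w1 (- int l) \<noteq> shift w2 (- int l)" using ne shift_inj by blast
    then have "2 \<le> card {x\<in>S1. occurs_at u x 0}"
      using card_mono[OF _ sub] cyclic_finite[OF S1(3)] by simp
    then have "occ (Cyc T) S1 < occ (Fin u) S1" using occ_Fin_cnt[OF C S1(1)] unfolding cnt_def by simp
    then show ?thesis using S1 by blast
  next
    case False
    have pos: "occ (Fin u) S > 0" if "w \<in> ?W" "w \<in> S" "is_cyclic S" "S \<in> C" for w S
    proof -
      have "card {x\<in>S. occurs_at u x 0} > 0" using xmem[OF that(1-3)] cyclic_finite[OF that(3)]
        by (metis (no_types, lifting) card_gt_0_iff empty_iff finite_subset mem_Collect_eq subsetI)
      then show ?thesis using occ_Fin_cnt[OF C that(4)] unfolding cnt_def by simp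
    qed
    show ?thesis
    proof (cases "T = S1")
      case True
      then have "occ (Cyc T) S2 = 0" using False by simp
      then show ?thesis using pos[OF w2 S2(2,3,1)] S2(1) by (metis)
    next
      case False
      then have "occ (Cyc T) S1 = 0" by simp
      then show ?thesis using pos[OF w1 S1(2,3,1)] S1(1) by (metis)
    qed
  qed
  have MESu: "MES C (Fin u)"
    unfolding MES_def
  proof (intro conjI allI impI)
    show "wf_str (Fin u)" by simp
    show "substr_of (Fin u) C" unfolding substr_of_def using S1 U1[OF w1] by auto
    fix t assume t: "wf_str t \<and> t \<noteq> Fin u \<and> substr (Fin u) t"
    show "\<exists>S\<in>C. occ t S < occ (Fin u) S"
    proof (cases t)
      case (Cyc T) then show ?thesis using two by simp
    next
      case (Fin v)
      obtain xs ys where v: "v = xs @ u @ ys" using t Fin by auto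
      have xy: "xs \<noteq> [] \<or> ys \<noteq> []" using t Fin v by auto
      have gen: ?thesis if p: "p < length v" and nag: "\<not> ag (int p - int (length xs) - int l)"
        and vx: "\<forall>w\<in>?W. shift w (- int l) (int p - int (length xs)) = w (int p - int (length xs) - int l)" for p
      proof -
        obtain wa wb where wab: "wa \<in> ?W" "wb \<in> ?W" "wa (int p - int (length xs) - int l) \<noteq> wb (int p - int (length xs) - int l)"
          using nag unfolding ag_def by blast
        obtain wc where wc: "wc \<in> ?W" "wc (int p - int (length xs) - int l) \<noteq> v ! p"
          using wab by metis
        obtain Sc where Sc: "Sc \<in> C" "wc \<in> Sc" "is_cyclic Sc" using Wmem[OF wc(1)] by blast
        have "cnt Sc v < cnt Sc u"
          apply (rule cnt_strict[OF cyclic_finite[OF Sc(3)] cyc_closed[OF Sc(3)], of "shift wc (- int l)" _ v xs ys p])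
          using xmem[OF wc(1) Sc(2,3)] v p wc(2) vx wc(1) by auto
        then have "occ t Sc < occ (Fin u) Sc" using Fin occ_Fin_cnt[OF C Sc(1)] by (simp only:)
        then show ?thesis using Sc(1) by blast
      qed
      show ?thesis
      proof (cases "ys = []")
        case False
        show ?thesis
          apply (rule gen[of "length xs + l + r"])
          using False v lu nr by (auto simp: shift_app)
      next
        case True
        then have "xs \<noteq> []" using xy by simp
        then have lx: "length xs \<ge> 1" by (cases xs) auto
        then have eqx: "int (length xs - 1) - int (length xs) - int l = - int l - 1" by simp
        show ?thesis
          apply (rule gen[of "length xs - 1"])
          using lx v nl eqx by (auto simp: shift_app) (metis diff_conv_add_uminus add.commute)
      qed
    qed
  qed
  have P: "Pm C s (Fin u)" unfolding Pm_def using MESu occ1 ext by blast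
  show ?thesis
  proof (rule ex1I[of _ "Fin u"], rule P)
    fix m assume Pm: "Pm C s m"
    have extm: "extends_to s w 0 m" if w: "w \<in> ?W" for w
    proof -
      obtain S where "S \<in> C" "w \<in> S" using Wmem[OF w] by blast
      then show ?thesis using Pm Wocc[OF w] unfolding Pm_def by blast
    qed
    show "m = Fin u"
    proof (cases m)
      case (Cyc T)
      have cT: "is_cyclic T" using Pm Cyc unfolding Pm_def MES_def by simp
      have "w1 \<in> T" "w2 \<in> T" using extm[OF w1] extm[OF w2] Cyc by auto
      then have "{w1, w2} \<subseteq> {w\<in>T. occurs_at s w 0}" using Wocc[OF w1] Wocc[OF w2] by blast
      then have "2 \<le> card {w\<in>T. occurs_at s w 0}" using card_mono[of "{w\<in>T. occurs_at s w 0}" "{w1,w2}"] cyclic_finite[OF cT] ne by simp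
      moreover have "occ_fin s m = 1" using Pm unfolding Pm_def by simp
      ultimately show ?thesis using occ_fin_cnt[OF cT] Cyc unfolding cnt_def by simp
    next
      case (Fin u')
      have "card {k. occurs_at_list s u' k} = 1" using Pm Fin unfolding Pm_def by simp
      then obtain k' where k': "{k. occurs_at_list s u' k} = {k'}" using card_1_singletonE by blast
      have k'o: "occurs_at_list s u' k'" using k' by blast
      have ext': "occurs_at u' w (- int k')" if w: "w \<in> ?W" for w
      proof -
        obtain k where "occurs_at_list s u' k" "occurs_at u' w (0 - int k)" using extm[OF w] Fin by auto
        then show ?thesis using k' by auto
      qed
      have kb: "k' + length s \<le> length u'" using k'o unfolding occurs_at_list_def by simp
      have val: "w (- int k' + int j) = u' ! j" if "w \<in> ?W" "j < length u'" for w j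
        using ext'[OF that(1)] that(2) unfolding occurs_at_def by blast
      have kl: "k' \<le> l"
      proof (rule ccontr)
        assume "\<not> k' \<le> l"
        then have j: "k' - l - 1 < length u'" "- int k' + int (k' - l - 1) = - int l - 1" using kb by auto
        have "ag (- int l - 1)" unfolding ag_def using val[OF _ j(1)] j(2) by metis
        then show False using nl by simp
      qed
      have ur: "length u' \<le> k' + r"
      proof (rule ccontr)
        assume "\<not> length u' \<le> k' + r"
        then have j: "k' + r < length u'" "- int k' + int (k' + r) = int r" by auto
        have "ag (int r)" unfolding ag_def using val[OF _ j(1)] j(2) by metis
        then show False using nr by simp
      qed
      define d where "d = l - k'"
      have u'eq: "u' = take (length u') (drop d u)"
      proof (rule nth_equalityI)
        show "length u' = length (take (length u') (drop d u))" using lu kl ur d_def by simp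
        fix j assume "j < length u'"
        then have j: "j < length u'" "d + j < l + r" using kl ur d_def by auto
        have "take (length u') (drop d u) ! j = u ! (d + j)" using j lu by simp
        also have "\<dots> = w1 (int (d + j) - int l)" using unth[OF j(2)] .
        also have "\<dots> = w1 (- int k' + int j)" using kl d_def by (simp add: of_nat_diff)
        also have "\<dots> = u' ! j" using val[OF w1 j(1)] .
        finally show "u' ! j = take (length u') (drop d u) ! j" by simp
      qed
      have "u = take d u @ u' @ drop (length u') (drop d u)"
        using u'eq by (metis append_take_drop_id)
      then have subs: "substr (Fin u') (Fin u)" by (metis substr.simps(1))
      show ?thesis
      proof (rule ccontr)
        assume "m \<noteq> Fin u"
        then have "Fin u \<noteq> Fin u'" using Fin by simp
        moreover have "\<forall>t. wf_str t \<and> t \<noteq> Fin u' \<and> substr (Fin u') t \<longrightarrow> (\<exists>S\<in>C. occ t S < occ (Fin u') S)"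
          using Pm Fin unfolding Pm_def MES_def by blast
        ultimately obtain S where S: "S \<in> C" "occ (Fin u) S < occ (Fin u') S"
          using subs by (metis wf_str.simps(1))
        have cS: "is_cyclic S" using C S(1) unfolding chromosome_set_def by blast
        have "cnt S u' \<le> cnt S u"
        proof (rule cnt_le[OF cyclic_finite[OF cS] cyc_closed[OF cS], of _ _ "int k' - int l"], intro ballI impI)
          fix w assume w: "w \<in> S" "occurs_at u' w 0"
          have "occurs_at s w (int k')" using occ_list_trans[OF k'o w(2)] by simp
          then have "shift w (int k') \<in> ?W" using occW_intro[OF C S(1) w(1)] by blast
          then have "occurs_at u (shift w (int k')) (- int l)" using U1 by blast
          then show "occurs_at u (shift w (int k' - int l)) 0" by (simp add: occurs_at_shift algebra_simps)
        qed
        then show False using S(2) occ_Fin_cnt[OF C S(1)] by simp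
      qed
    qed
  qed
qed


theorem theorem10:
  fixes C :: "(int \<Rightarrow> 'a::finite) set set" and s :: "'a list"
  assumes "chromosome_set C"
    and "s \<noteq> []"
    and "substr_of (Fin s) C"
  shows "\<exists>!m. MES C m \<and> occ_fin s m = 1 \<and>
           (\<forall>S\<in>C. \<forall>f\<in>S. \<forall>i. occurs_at s f i \<longrightarrow> extends_to s f i m)"
proof -
  obtain S f i where "S \<in> C" "f \<in> S" "occurs_at s f i"
    using assms(3) unfolding substr_of_def by auto
  then have ne: "shift f i \<in> occW C s" using occW_intro[OF assms(1)] by blast
  have "\<exists>!m. Pm C s m"
  proof (cases "\<exists>w0. occW C s = {w0}")
    case True
    then show ?thesis using caseA[OF assms(1)] by blast
  next
    case False
    then obtain w2 where "w2 \<in> occW C s" "w2 \<noteq> shift f i" using ne by blast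
    then show ?thesis using caseB[OF assms(1,2) ne] by blast
  qed
  then show ?thesis unfolding Pm_def .
qed

end
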